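(* Let $f:\mathbb Z^2_e\to\mathbb P^3$ and $G:\mathbb Z^2_o\to\{\text{planes in }\mathbb P^3\}$ be generic, and consider the tiling of the plane by the square lattice graph on $\mathbb Z^2$ (edges between lattice-adjacent points, faces the unit squares), with vertex $(i,j)\in\mathbb Z^2_e$ white and labeled by the point $f_{i,j}$, and vertex $(i,j)\in\mathbb Z^2_o$ black and labeled by the plane $G_{i,j}$. Then: (V) the labels of the neighbors of each vertex form a circuit if and only if $f$ is a $Q$-net and $G$ is a $Q^*$-net; and, assuming this, (F) every unit-square face is coherent if and only if $f$ and $g$ are $F$-transforms of each other, where $g:\mathbb Z^2_e\to\mathbb P^3$ is given by $g_{i,j}=G_{i-1,j}\cap G_{i,j-1}\cap G_{i+1,j}\cap G_{i,j+1}$.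
   Context: $\mathbb Z^2_e=\{(i,j): i+j\text{ even}\}$, $\mathbb Z^2_o=\{(i,j): i+j\text{ odd}\}$. A map $f$ from $\mathbb Z^2_e$ (resp. $\mathbb Z^2_o$) to $\mathbb P^3$ is a $Q$-net if for every $(i,j)\in\mathbb Z^2_o$ (resp. $\mathbb Z^2_e$) the four points $f_{i\pm1,j},f_{i,j\pm1}$ are coplanar. A $Q^*$-net is the dual notion: a map to planes such that the four planes $G_{i\pm1,j},G_{i,j\pm1}$ share a common point. Two $Q$-nets $f,g$ with the same domain are $F$-transforms of each other if for every $(i,j)$ in the domain and each sign the four points $f_{i,j},g_{i,j},f_{i+1,j\pm1},g_{i+1,j\pm1}$ are coplanar. A circuit is a linearly dependent set of points (or planes, viewed in the dual space) all of whose proper subsets are independent. A face with vertices labeled by points $A_1,\dots,A_n$ and planes $\ell_1,\dots,\ell_n$ in cyclic (clockwise) order is coherent if the multi-ratio $\frac{\boldsymbol\ell_1(\mathbf A_1)\cdots\boldsymbol\ell_n(\mathbf A_n)}{\boldsymbol\ell_1(\mathbf A_2)\cdots\boldsymbol\ell_n(\mathbf A_1)}$ of lifts to vectors/covectors of $\mathbb C^4$ equals $1$; for a quadrilateral with points $A,B$ and planes $c,d$ this holds iff $A=B$, or $c=d$, or the line $AB$ meets the line $c\cap d$. Generic means all labels are distinct and in general position apart from the imposed conditions. *)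

theory Defs
  imports "HOL-Analysis.Analysis"
begin

text \<open>A point of P^3 is represented by a
  (nonzero) lift in complex^4, a plane by a (nonzero) covector, also stored in complex^4.
  All notions below are invariant under rescaling of lifts.\<close>

type_synonym vec4 = "complex ^ 4"

definition pair :: "vec4 \<Rightarrow> vec4 \<Rightarrow> complex" where
  "pair l x = (\<Sum>k\<in>UNIV. l $ k * x $ k)"

definition dep_on :: "vec4 list \<Rightarrow> nat set \<Rightarrow> bool" where
  "dep_on vs S \<longleftrightarrow> (\<exists>c. (\<exists>k\<in>S. c k \<noteq> 0) \<and> (\<Sum>k\<in>S. c k *s (vs ! k)) = 0)"

definition dependent_list :: "vec4 list \<Rightarrow> bool" where
  "dependent_list vs \<longleftrightarrow> dep_on vs {..<length vs}"

definition circuit :: "vec4 list \<Rightarrow> bool" where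
  "circuit vs \<longleftrightarrow> dep_on vs {..<length vs} \<and> (\<forall>S. S \<subset> {..<length vs} \<longrightarrow> \<not> dep_on vs S)"

definition coplanar :: "vec4 list \<Rightarrow> bool" where
  "coplanar ps \<longleftrightarrow> (\<exists>l. l \<noteq> 0 \<and> (\<forall>p\<in>set ps. pair l p = 0))"

definition concurrent :: "vec4 list \<Rightarrow> bool" where
  "concurrent ls \<longleftrightarrow> (\<exists>x. x \<noteq> 0 \<and> (\<forall>l\<in>set ls. pair l x = 0))"

definition even_v :: "int \<times> int \<Rightarrow> bool" where
  "even_v p \<longleftrightarrow> even (fst p + snd p)"

definition nbrs :: "int \<times> int \<Rightarrow> (int \<times> int) list" where
  "nbrs p = (case p of (i, j) \<Rightarrow> [(i - 1, j), (i + 1, j), (i, j - 1), (i, j + 1)])"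

definition Q_net :: "(int \<times> int \<Rightarrow> vec4) \<Rightarrow> bool" where
  "Q_net f \<longleftrightarrow> (\<forall>p. \<not> even_v p \<longrightarrow> coplanar (map f (nbrs p)))"

definition Qstar_net :: "(int \<times> int \<Rightarrow> vec4) \<Rightarrow> bool" where
  "Qstar_net G \<longleftrightarrow> (\<forall>p. even_v p \<longrightarrow> concurrent (map G (nbrs p)))"

definition F_transforms :: "(int \<times> int \<Rightarrow> vec4) \<Rightarrow> (int \<times> int \<Rightarrow> vec4) \<Rightarrow> bool" where
  "F_transforms f g \<longleftrightarrow> (\<forall>i j. even (i + j) \<longrightarrow> (\<forall>s\<in>{1, -1::int}.
      coplanar [f (i, j), g (i, j), f (i + 1, j + s), g (i + 1, j + s)]))"

text \<open>Multi-ratio of a face with points A_1..A_n and planes l_1..l_n in cyclic clockwise order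
  (A_1, l_1, A_2, l_2, ...).\<close>
definition multi_ratio :: "vec4 list \<Rightarrow> vec4 list \<Rightarrow> complex" where
  "multi_ratio As ls = (let n = length As in
     (\<Prod>k<n. pair (ls ! k) (As ! k)) / (\<Prod>k<n. pair (ls ! k) (As ! ((k + 1) mod n))))"

definition coherent :: "vec4 list \<Rightarrow> vec4 list \<Rightarrow> bool" where
  "coherent As ls \<longleftrightarrow> multi_ratio As ls = 1"

text \<open>The unit square with lower-left corner (i,j); clockwise order of its vertices is
  (i,j), (i,j+1), (i+1,j+1), (i+1,j). White vertices carry f, black ones G.\<close>
definition face_coherent :: "(int \<times> int \<Rightarrow> vec4) \<Rightarrow> (int \<times> int \<Rightarrow> vec4) \<Rightarrow> int \<Rightarrow> int \<Rightarrow> bool" where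
  "face_coherent f G i j \<longleftrightarrow>
     (if even (i + j)
      then coherent [f (i, j), f (i + 1, j + 1)] [G (i, j + 1), G (i + 1, j)]
      else coherent [f (i, j + 1), f (i + 1, j)] [G (i + 1, j + 1), G (i, j)])"

text \<open>Genericity: labels nonzero and pairwise distinct (as projective objects); the labels of
  the neighbours of any vertex in general position (any three independent); no point lies on
  an adjacent plane; and no point lies on all the neighbour planes of two distinct white
  vertices (general position of the planes beyond the imposed concurrency).\<close>
definition generic :: "(int \<times> int \<Rightarrow> vec4) \<Rightarrow> (int \<times> int \<Rightarrow> vec4) \<Rightarrow> bool" where
  "generic f G \<longleftrightarrow>
     (\<forall>p. even_v p \<longrightarrow> f p \<noteq> 0) \<and> (\<forall>p. \<not> even_v p \<longrightarrow> G p \<noteq> 0) \<and>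
     (\<forall>p q. even_v p \<and> even_v q \<and> p \<noteq> q \<longrightarrow> \<not> dependent_list [f p, f q]) \<and>
     (\<forall>p q. \<not> even_v p \<and> \<not> even_v q \<and> p \<noteq> q \<longrightarrow> \<not> dependent_list [G p, G q]) \<and>
     (\<forall>p. \<not> even_v p \<longrightarrow> (\<forall>S. S \<subseteq> {..<4} \<and> card S = 3 \<longrightarrow> \<not> dep_on (map f (nbrs p)) S)) \<and>
     (\<forall>p. even_v p \<longrightarrow> (\<forall>S. S \<subseteq> {..<4} \<and> card S = 3 \<longrightarrow> \<not> dep_on (map G (nbrs p)) S)) \<and>
     (\<forall>p. even_v p \<longrightarrow> (\<forall>q\<in>set (nbrs p). pair (G q) (f p) \<noteq> 0)) \<and>
     (\<forall>p q. even_v p \<and> even_v q \<and> p \<noteq> q \<longrightarrow> \<not> concurrent (map G (nbrs p @ nbrs q)))"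

end

theory Submission
  imports Defs
begin
lemma kerdet:
  fixes A :: "'a::field^'n^'n"
  shows "(\<exists>x. x \<noteq> 0 \<and> A *v x = 0) \<longleftrightarrow> det A = 0"
proof -
  have "det A \<noteq> 0 \<longleftrightarrow> inj ((*v) A)"
    using det_nz_iff_inj_gen[OF matrix_vector_mul_linear_gen, of A]
    by (simp add: matrix_of_matrix_vector_mul[unfolded fun_eq_iff] )
  also have "\<dots> \<longleftrightarrow> (\<forall>x. A *v x = 0 \<longrightarrow> x = 0)"
    using vec.linear_inj_iff_eq_0[OF matrix_vector_mul_linear_gen] by blast
  finally show ?thesis by blast
qed

lemma L4:
  fixes v0 v1 v2 v3 :: vec4
  shows "(\<exists>c0 c1 c2 c3. (c0 \<noteq> 0 \<or> c1 \<noteq> 0 \<or> c2 \<noteq> 0 \<or> c3 \<noteq> 0) \<and>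
            c0 *s v0 + c1 *s v1 + c2 *s v2 + c3 *s v3 = 0)
      \<longleftrightarrow> (\<exists>x. x \<noteq> 0 \<and> pair v0 x = 0 \<and> pair v1 x = 0 \<and> pair v2 x = 0 \<and> pair v3 x = 0)"
proof -
  define M :: "complex^4^4" where
    "M = (\<chi> i. if i = 1 then v0 else if i = 2 then v1 else if i = 3 then v2 else v3)"
  have r: "M $ 1 = v0" "M $ 2 = v1" "M $ 3 = v2" "M $ 4 = v3"
    by (simp_all add: M_def)
  have mv: "M *v x = 0 \<longleftrightarrow> pair v0 x = 0 \<and> pair v1 x = 0 \<and> pair v2 x = 0 \<and> pair v3 x = 0" for x
    by (simp add: vec_eq_iff forall_4 matrix_vector_mult_def pair_def r[symmetric])
  have vm: "y v* M = y$1 *s v0 + y$2 *s v1 + y$3 *s v2 + y$4 *s v3" for y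
    by (simp add: vec_eq_iff vector_matrix_mult_def sum_4 r[symmetric] mult.commute)
  have nz: "y \<noteq> 0 \<longleftrightarrow> (y$1 \<noteq> 0 \<or> y$2 \<noteq> 0 \<or> y$3 \<noteq> 0 \<or> y$4 \<noteq> 0)" for y :: "complex^4"
    by (simp add: vec_eq_iff forall_4)
  have "(\<exists>x. x \<noteq> 0 \<and> pair v0 x = 0 \<and> pair v1 x = 0 \<and> pair v2 x = 0 \<and> pair v3 x = 0) \<longleftrightarrow> det M = 0"
    using kerdet[of M] mv by simp
  moreover have "(\<exists>y. y \<noteq> 0 \<and> transpose M *v y = 0) \<longleftrightarrow> det M = 0"
    using kerdet[of "transpose M"] by simp
  moreover have "(\<exists>y. y \<noteq> 0 \<and> transpose M *v y = 0) \<longleftrightarrow>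
     (\<exists>c0 c1 c2 c3. (c0 \<noteq> 0 \<or> c1 \<noteq> 0 \<or> c2 \<noteq> 0 \<or> c3 \<noteq> 0) \<and>
            c0 *s v0 + c1 *s v1 + c2 *s v2 + c3 *s v3 = 0)"
  proof
    assume "\<exists>y. y \<noteq> 0 \<and> transpose M *v y = 0"
    then obtain y where "y \<noteq> 0" "transpose M *v y = 0" by blast
    then show "\<exists>c0 c1 c2 c3. (c0 \<noteq> 0 \<or> c1 \<noteq> 0 \<or> c2 \<noteq> 0 \<or> c3 \<noteq> 0) \<and>
            c0 *s v0 + c1 *s v1 + c2 *s v2 + c3 *s v3 = 0"
      using vm nz by (metis transpose_matrix_vector)
  next
    assume "\<exists>c0 c1 c2 c3. (c0 \<noteq> 0 \<or> c1 \<noteq> 0 \<or> c2 \<noteq> 0 \<or> c3 \<noteq> 0) \<and>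
            c0 *s v0 + c1 *s v1 + c2 *s v2 + c3 *s v3 = 0"
    then obtain c0 c1 c2 c3 where c: "c0 \<noteq> 0 \<or> c1 \<noteq> 0 \<or> c2 \<noteq> 0 \<or> c3 \<noteq> 0"
        "c0 *s v0 + c1 *s v1 + c2 *s v2 + c3 *s v3 = 0" by blast
    define y :: "complex^4" where
      "y = (\<chi> i. if i = 1 then c0 else if i = 2 then c1 else if i = 3 then c2 else c3)"
    have y: "y$1 = c0" "y$2 = c1" "y$3 = c2" "y$4 = c3" by (simp_all add: y_def)
    show "\<exists>y. y \<noteq> 0 \<and> transpose M *v y = 0"
      apply (rule exI[of _ y])
      using c y vm nz by simp
  qed
  ultimately show ?thesis by simp
qed

lemma pair_sym: "pair a b = pair b a"
  by (simp add: pair_def mult.commute)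

lemma pair_lin1: "pair (a *s l + b *s m) x = a * pair l x + b * pair m x"
  by (simp add: pair_def sum_distrib_left sum.distrib algebra_simps)

lemma pair_lin2: "pair l (a *s x + b *s y) = a * pair l x + b * pair l y"
  by (simp add: pair_def sum_distrib_left sum.distrib algebra_simps)

lemma pair_lin4: "pair l (a *s x + b *s y + c *s z + d *s w) =
    a * pair l x + b * pair l y + c * pair l z + d * pair l w"
  by (simp add: pair_def sum_distrib_left sum.distrib algebra_simps)

lemma lessThan4: "{..<4::nat} = {0,1,2,3}" by auto

lemma dep4:
  assumes "length vs = 4"
  shows "dep_on vs {..<4} \<longleftrightarrow> (\<exists>x. x \<noteq> 0 \<and> (\<forall>v\<in>set vs. pair v x = 0))"
proof -
  obtain a b c d where vs: "vs = [a,b,c,d]"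
    using assms by (auto simp: numeral_eq_Suc length_Suc_conv)
  have "dep_on vs {..<4} \<longleftrightarrow> (\<exists>c0 c1 c2 c3. (c0 \<noteq> 0 \<or> c1 \<noteq> 0 \<or> c2 \<noteq> 0 \<or> c3 \<noteq> 0) \<and>
            c0 *s a + c1 *s b + c2 *s c + c3 *s d = 0)"
  proof
    assume "dep_on vs {..<4}"
    then obtain e where "\<exists>k\<in>{..<4}. e k \<noteq> 0" "(\<Sum>k\<in>{..<4}. e k *s (vs ! k)) = 0"
      unfolding dep_on_def by blast
    then show "\<exists>c0 c1 c2 c3. (c0 \<noteq> 0 \<or> c1 \<noteq> 0 \<or> c2 \<noteq> 0 \<or> c3 \<noteq> 0) \<and>
            c0 *s a + c1 *s b + c2 *s c + c3 *s d = 0"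
      by (intro exI[of _ "e 0"] exI[of _ "e 1"] exI[of _ "e 2"] exI[of _ "e 3"])
         (auto simp: lessThan4 vs add.assoc)
  next
    assume "\<exists>c0 c1 c2 c3. (c0 \<noteq> 0 \<or> c1 \<noteq> 0 \<or> c2 \<noteq> 0 \<or> c3 \<noteq> 0) \<and>
            c0 *s a + c1 *s b + c2 *s c + c3 *s d = 0"
    then obtain c0 c1 c2 c3 where h: "c0 \<noteq> 0 \<or> c1 \<noteq> 0 \<or> c2 \<noteq> 0 \<or> c3 \<noteq> 0"
            "c0 *s a + c1 *s b + c2 *s c + c3 *s d = 0" by blast
    define e where "e = (\<lambda>k::nat. if k = 0 then c0 else if k = 1 then c1 else if k = 2 then c2 else c3)"
    show "dep_on vs {..<4}"
      unfolding dep_on_def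
      apply (rule exI[of _ e])
      using h by (auto simp: lessThan4 vs e_def add.assoc)
  qed
  also have "\<dots> \<longleftrightarrow> (\<exists>x. x \<noteq> 0 \<and> pair a x = 0 \<and> pair b x = 0 \<and> pair c x = 0 \<and> pair d x = 0)"
    by (rule L4)
  also have "\<dots> \<longleftrightarrow> (\<exists>x. x \<noteq> 0 \<and> (\<forall>v\<in>set vs. pair v x = 0))"
    by (simp add: vs)
  finally show ?thesis .
qed

lemma dep_mono:
  assumes "S \<subseteq> T" "finite T" "dep_on vs S"
  shows "dep_on vs T"
proof -
  obtain c where c: "\<exists>k\<in>S. c k \<noteq> 0" "(\<Sum>k\<in>S. c k *s (vs ! k)) = 0"
    using assms(3) unfolding dep_on_def by blast
  define d where "d = (\<lambda>k. if k \<in> S then c k else 0)"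
  have "(\<Sum>k\<in>T. d k *s (vs ! k)) = (\<Sum>k\<in>T. if k \<in> S then c k *s (vs ! k) else 0)"
    by (rule sum.cong) (auto simp: d_def)
  also have "\<dots> = (\<Sum>k\<in>T \<inter> S. c k *s (vs ! k))"
    using assms(2) by (rule sum.inter_restrict[symmetric])
  also have "T \<inter> S = S" using assms(1) by blast
  finally have "(\<Sum>k\<in>T. d k *s (vs ! k)) = 0" using c(2) by simp
  moreover have "\<exists>k\<in>T. d k \<noteq> 0" using c(1) assms(1) by (auto simp: d_def)
  ultimately show ?thesis unfolding dep_on_def by blast
qed

lemma circuit4:
  assumes "length vs = 4" "\<forall>S. S \<subseteq> {..<4} \<and> card S = 3 \<longrightarrow> \<not> dep_on vs S"
  shows "circuit vs \<longleftrightarrow> dep_on vs {..<4}"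
proof -
  have "\<not> dep_on vs S" if sub: "S \<subset> {..<4}" for S
  proof
    assume d: "dep_on vs S"
    obtain k where k: "k \<in> {..<4::nat}" "k \<notin> S" using sub by blast
    have "S \<subseteq> {..<4} - {k}" using sub k by blast
    moreover have "card ({..<4::nat} - {k}) = 3" using k by simp
    ultimately show False using dep_mono[OF _ _ d, of "{..<4} - {k}"] assms(2) by auto
  qed
  then show ?thesis unfolding circuit_def using assms(1) by auto
qed

lemma indep2:
  assumes "\<not> dependent_list [x, y]" "a *s x + b *s y = 0"
  shows "a = 0 \<and> b = 0"
proof (rule ccontr)
  assume n: "\<not> (a = 0 \<and> b = 0)"
  define c where "c = (\<lambda>k::nat. if k = 0 then a else b)"
  have "dep_on [x, y] {..<2}"
    unfolding dep_on_def
    apply (rule exI[of _ c])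
    using n assms(2) by (auto simp: c_def numeral_2_eq_2 lessThan_Suc add.commute)
  then show False using assms(1) unfolding dependent_list_def by (simp add: numeral_2_eq_2)
qed

lemma coherent2:
  assumes "pair l0 A1 \<noteq> 0" "pair l1 A0 \<noteq> 0"
  shows "coherent [A0, A1] [l0, l1] \<longleftrightarrow> pair l0 A0 * pair l1 A1 = pair l0 A1 * pair l1 A0"
  using assms by (simp add: coherent_def multi_ratio_def numeral_2_eq_2 lessThan_Suc mult.commute)

lemma face_core:
  assumes iA: "\<forall>a b. a *s A0 + b *s A1 = 0 \<longrightarrow> a = 0 \<and> b = 0"
    and il: "\<forall>a b. a *s l0 + b *s l1 = 0 \<longrightarrow> a = 0 \<and> b = 0"
    and iPQ: "\<forall>a b. a *s P + b *s Q = 0 \<longrightarrow> a = 0 \<and> b = 0"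
    and k: "pair l0 P = 0" "pair l1 P = 0" "pair l0 Q = 0" "pair l1 Q = 0"
    and nz: "pair l0 A0 \<noteq> 0" "pair l0 A1 \<noteq> 0" "pair l1 A0 \<noteq> 0" "pair l1 A1 \<noteq> 0"
  shows "coherent [A0, A1] [l0, l1] \<longleftrightarrow> coplanar [A0, P, A1, Q]"
proof -
  have "pair l0 A0 * pair l1 A1 = pair l0 A1 * pair l1 A0 \<longleftrightarrow> coplanar [A0, P, A1, Q]"
  proof
    assume N: "pair l0 A0 * pair l1 A1 = pair l0 A1 * pair l1 A0"
    define l where "l = pair l1 A0 *s l0 + (- pair l0 A0) *s l1"
    have "l \<noteq> 0" using il nz(1) unfolding l_def by (metis neg_equal_0_iff_equal)
    moreover have "pair l A0 = 0" "pair l A1 = 0" "pair l P = 0" "pair l Q = 0"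
      unfolding l_def pair_lin1 using k N by (simp_all add: algebra_simps)
    ultimately show "coplanar [A0, P, A1, Q]" unfolding coplanar_def by auto
  next
    assume "coplanar [A0, P, A1, Q]"
    then obtain x where "x \<noteq> 0" "\<forall>v\<in>set [A0, P, A1, Q]. pair v x = 0"
      unfolding coplanar_def by (auto simp: pair_sym)
    then have "\<exists>c0 c1 c2 c3. (c0 \<noteq> 0 \<or> c1 \<noteq> 0 \<or> c2 \<noteq> 0 \<or> c3 \<noteq> 0) \<and>
            c0 *s A0 + c1 *s P + c2 *s A1 + c3 *s Q = 0"
      using L4[of A0 P A1 Q] by auto
    then obtain c0 c1 c2 c3 where c: "c0 \<noteq> 0 \<or> c1 \<noteq> 0 \<or> c2 \<noteq> 0 \<or> c3 \<noteq> 0"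
        "c0 *s A0 + c1 *s P + c2 *s A1 + c3 *s Q = 0" by blast
    have e0: "c0 * pair l0 A0 + c2 * pair l0 A1 = 0"
      using arg_cong[OF c(2), of "pair l0"] k by (simp add: pair_lin4 pair_def[of _ 0])
    have e1: "c0 * pair l1 A0 + c2 * pair l1 A1 = 0"
      using arg_cong[OF c(2), of "pair l1"] k by (simp add: pair_lin4 pair_def[of _ 0])
    show "pair l0 A0 * pair l1 A1 = pair l0 A1 * pair l1 A0"
    proof (rule ccontr)
      assume D: "pair l0 A0 * pair l1 A1 \<noteq> pair l0 A1 * pair l1 A0"
      have "c0 * (pair l0 A0 * pair l1 A1 - pair l0 A1 * pair l1 A0) = 0"
      proof -
        have "c0 * (pair l0 A0 * pair l1 A1 - pair l0 A1 * pair l1 A0) =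
          pair l1 A1 * (c0 * pair l0 A0 + c2 * pair l0 A1) - pair l0 A1 * (c0 * pair l1 A0 + c2 * pair l1 A1)"
          by (simp add: algebra_simps)
        then show ?thesis using e0 e1 by simp
      qed
      then have c0: "c0 = 0" using D by simp
      have c2: "c2 = 0" using e0 c0 nz(2) by simp
      have "c1 *s P + c3 *s Q = 0" using c(2) c0 c2 by simp
      then show False using iPQ c(1) c0 c2 by blast
    qed
  qed
  then show ?thesis using coherent2[OF nz(2) nz(3)] by simp
qed

lemma face_inst:
  assumes gen: "generic f G"
    and gh: "\<forall>p. even_v p \<longrightarrow> g p \<noteq> 0 \<and> (\<forall>q\<in>set (nbrs p). pair (G q) (g p) = 0)"
    and pq: "even_v p" "even_v q" "p \<noteq> q"
    and ab: "\<not> even_v a" "\<not> even_v b" "a \<noteq> b"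
    and mem: "a \<in> set (nbrs p)" "a \<in> set (nbrs q)" "b \<in> set (nbrs p)" "b \<in> set (nbrs q)"
  shows "coherent [f p, f q] [G a, G b] \<longleftrightarrow> coplanar [f p, g p, f q, g q]"
proof (rule face_core)
  have g3: "\<forall>p q. even_v p \<and> even_v q \<and> p \<noteq> q \<longrightarrow> \<not> dependent_list [f p, f q]"
   and g4: "\<forall>p q. \<not> even_v p \<and> \<not> even_v q \<and> p \<noteq> q \<longrightarrow> \<not> dependent_list [G p, G q]"
   and g7: "\<forall>p. even_v p \<longrightarrow> (\<forall>q\<in>set (nbrs p). pair (G q) (f p) \<noteq> 0)"
   and g8: "\<forall>p q. even_v p \<and> even_v q \<and> p \<noteq> q \<longrightarrow> \<not> concurrent (map G (nbrs p @ nbrs q))"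
    using gen unfolding generic_def by simp_all
  show "\<forall>a' b'. a' *s f p + b' *s f q = 0 \<longrightarrow> a' = 0 \<and> b' = 0"
  proof (intro allI impI)
    fix a' b' assume "a' *s f p + b' *s f q = 0"
    moreover have "\<not> dependent_list [f p, f q]" using g3 pq by blast
    ultimately show "a' = 0 \<and> b' = 0" using indep2 by blast
  qed
  show "\<forall>a' b'. a' *s G a + b' *s G b = 0 \<longrightarrow> a' = 0 \<and> b' = 0"
  proof (intro allI impI)
    fix a' b' assume "a' *s G a + b' *s G b = 0"
    moreover have "\<not> dependent_list [G a, G b]" using g4 ab by blast
    ultimately show "a' = 0 \<and> b' = 0" using indep2 by blast
  qed
  show "pair (G a) (g p) = 0" "pair (G b) (g p) = 0" "pair (G a) (g q) = 0" "pair (G b) (g q) = 0"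
  proof -
    have "\<forall>r\<in>set (nbrs p). pair (G r) (g p) = 0" "\<forall>r\<in>set (nbrs q). pair (G r) (g q) = 0"
      using spec[OF gh, of p] spec[OF gh, of q] pq by auto
    then show "pair (G a) (g p) = 0" "pair (G b) (g p) = 0" "pair (G a) (g q) = 0" "pair (G b) (g q) = 0"
      using mem by auto
  qed
  show "pair (G a) (f p) \<noteq> 0" "pair (G a) (f q) \<noteq> 0" "pair (G b) (f p) \<noteq> 0" "pair (G b) (f q) \<noteq> 0"
  proof -
    have "\<forall>r\<in>set (nbrs p). pair (G r) (f p) \<noteq> 0" "\<forall>r\<in>set (nbrs q). pair (G r) (f q) \<noteq> 0"
      using spec[OF g7, of p] spec[OF g7, of q] pq by auto
    then show "pair (G a) (f p) \<noteq> 0" "pair (G a) (f q) \<noteq> 0" "pair (G b) (f p) \<noteq> 0" "pair (G b) (f q) \<noteq> 0"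
      using mem by auto
  qed
  show "\<forall>a' b'. a' *s g p + b' *s g q = 0 \<longrightarrow> a' = 0 \<and> b' = 0"
  proof (intro allI impI)
    fix a' b' assume e: "a' *s g p + b' *s g q = 0"
    show "a' = 0 \<and> b' = 0"
    proof (rule ccontr)
      assume n: "\<not> (a' = 0 \<and> b' = 0)"
      have gq: "g q \<noteq> 0" "g p \<noteq> 0" using gh pq by blast+
      have a0: "a' \<noteq> 0"
      proof
        assume "a' = 0"
        then have "b' *s g q = 0" "b' \<noteq> 0" using e n by auto
        then show False using gq by (simp add: vec_eq_iff)
      qed
      have "pair (G r) (g p) = 0" if r: "r \<in> set (nbrs q)" for r
      proof -
        have "pair (G r) (a' *s g p + b' *s g q) = 0" using e by (simp add: pair_def)
        then have "a' * pair (G r) (g p) + b' * pair (G r) (g q) = 0" by (simp add: pair_lin2)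
        moreover have "pair (G r) (g q) = 0" using gh pq r by blast
        ultimately show ?thesis using a0 by simp
      qed
      moreover have "pair (G r) (g p) = 0" if r: "r \<in> set (nbrs p)" for r
        using gh pq r by blast
      ultimately have "concurrent (map G (nbrs p @ nbrs q))"
        unfolding concurrent_def using gq by auto
      then show False using g8 pq by blast
    qed
  qed
qed

theorem mainTheorem8:
  fixes f G :: "int \<times> int \<Rightarrow> complex ^ 4"
  assumes gen: "generic f G"
  shows "((\<forall>p. if even_v p then circuit (map G (nbrs p)) else circuit (map f (nbrs p)))
            \<longleftrightarrow> Q_net f \<and> Qstar_net G)
       \<and> (Q_net f \<and> Qstar_net G \<longrightarrow>
            (\<forall>g :: int \<times> int \<Rightarrow> complex ^ 4.
               (\<forall>p. even_v p \<longrightarrow> g p \<noteq> 0 \<and> (\<forall>q\<in>set (nbrs p). pair (G q) (g p) = 0)) \<longrightarrow>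
               ((\<forall>i j. face_coherent f G i j) \<longleftrightarrow> F_transforms f g)))"
proof (intro conjI impI allI)
  have g5: "\<forall>p. \<not> even_v p \<longrightarrow> (\<forall>S. S \<subseteq> {..<4} \<and> card S = 3 \<longrightarrow> \<not> dep_on (map f (nbrs p)) S)"
   and g6: "\<forall>p. even_v p \<longrightarrow> (\<forall>S. S \<subseteq> {..<4} \<and> card S = 3 \<longrightarrow> \<not> dep_on (map G (nbrs p)) S)"
    using gen unfolding generic_def by simp_all
  have len: "length (map h (nbrs p)) = 4" for h :: "int \<times> int \<Rightarrow> vec4" and p
    by (cases p) (simp add: nbrs_def)
  have eG: "circuit (map G (nbrs p)) \<longleftrightarrow> concurrent (map G (nbrs p))" if "even_v p" for p
    using circuit4[OF len spec[OF g6, of p, THEN mp, OF that]] dep4[OF len] unfolding concurrent_def by blast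
  have of: "circuit (map f (nbrs p)) \<longleftrightarrow> coplanar (map f (nbrs p))" if "\<not> even_v p" for p
    using circuit4[OF len spec[OF g5, of p, THEN mp, OF that]] dep4[OF len] unfolding coplanar_def
    by (simp add: pair_sym)
  show "(\<forall>p. if even_v p then circuit (map G (nbrs p)) else circuit (map f (nbrs p)))
            \<longleftrightarrow> Q_net f \<and> Qstar_net G"
  proof -
    have e: "(if even_v p then circuit (map G (nbrs p)) else circuit (map f (nbrs p))) \<longleftrightarrow>
       (even_v p \<longrightarrow> concurrent (map G (nbrs p))) \<and> (\<not> even_v p \<longrightarrow> coplanar (map f (nbrs p)))" for p
      using eG[of p] of[of p] by auto
    show ?thesis unfolding Q_net_def Qstar_net_def by (simp only: e) blast
  qed
next
  fix g :: "int \<times> int \<Rightarrow> vec4"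
  assume gh: "\<forall>p. even_v p \<longrightarrow> g p \<noteq> 0 \<and> (\<forall>q\<in>set (nbrs p). pair (G q) (g p) = 0)"
  have fe: "face_coherent f G i j \<longleftrightarrow> coplanar [f (i, j), g (i, j), f (i + 1, j + 1), g (i + 1, j + 1)]"
    if "even (i + j)" for i j
  proof -
    have "face_coherent f G i j \<longleftrightarrow> coherent [f (i, j), f (i + 1, j + 1)] [G (i, j + 1), G (i + 1, j)]"
      using that by (simp add: face_coherent_def)
    also have "\<dots> \<longleftrightarrow> coplanar [f (i, j), g (i, j), f (i + 1, j + 1), g (i + 1, j + 1)]"
      by (rule face_inst[OF gen gh]) (use that in \<open>auto simp: even_v_def nbrs_def\<close>)
    finally show ?thesis .
  qed
  have fo: "face_coherent f G i j \<longleftrightarrow> coplanar [f (i, j + 1), g (i, j + 1), f (i + 1, j), g (i + 1, j)]"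
    if "odd (i + j)" for i j
  proof -
    have "face_coherent f G i j \<longleftrightarrow> coherent [f (i, j + 1), f (i + 1, j)] [G (i + 1, j + 1), G (i, j)]"
      using that by (simp add: face_coherent_def)
    also have "\<dots> \<longleftrightarrow> coplanar [f (i, j + 1), g (i, j + 1), f (i + 1, j), g (i + 1, j)]"
      by (rule face_inst[OF gen gh]) (use that in \<open>auto simp: even_v_def nbrs_def\<close>)
    finally show ?thesis .
  qed
  show "(\<forall>i j. face_coherent f G i j) \<longleftrightarrow> F_transforms f g"
  proof
    assume A: "\<forall>i j. face_coherent f G i j"
    show "F_transforms f g"
      unfolding F_transforms_def
    proof (intro allI impI ballI)
      fix i j s :: int assume ev: "even (i + j)" and s: "s \<in> {1, -1}"
      show "coplanar [f (i, j), g (i, j), f (i + 1, j + s), g (i + 1, j + s)]"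
      proof (cases "s = 1")
        case True then show ?thesis using A fe[OF ev] by simp
      next
        case False
        then have s': "s = -1" using s by simp
        have o: "odd (i + (j - 1))" using ev by simp
        show ?thesis using A fo[OF o] s' by simp
      qed
    qed
  next
    assume F: "F_transforms f g"
    show "\<forall>i j. face_coherent f G i j"
    proof (intro allI)
      fix i j :: int
      show "face_coherent f G i j"
      proof (cases "even (i + j)")
        case True
        then show ?thesis using F fe[OF True] unfolding F_transforms_def by fastforce
      next
        case False
        have e: "even (i + (j + 1))" using False by simp
        have "coplanar [f (i, j + 1), g (i, j + 1), f (i + 1, j + 1 + -1), g (i + 1, j + 1 + -1)]"
          using F e unfolding F_transforms_def by blast
        then show ?thesis using fo False by simp
      qed
    qed
  qed
qed
end
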